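(* Let $T\ge1$, let the label set be $\{0,1\}^T$ (so $k=2^T$, identified with $\{1,\dots,k\}$), and let $L_{Ham,T}(\hat y,y)=\frac1T\sum_{t=1}^T[\hat y_t\ne y_t]$ be the normalized Hamming loss, with quadratic surrogate $\Phi_{quad}(f,y)=\frac1{2k}\|f+L_{Ham,T}(:,y)\|_2^2$. If the scores are constrained to the column space $\mathcal{F}_{Ham,T}=\mathrm{span}(L_{Ham,T})$, then $$H_{\Phi_{quad},L_{Ham,T},\mathcal{F}_{Ham,T}}(\varepsilon)=\frac{\varepsilon^2}{8T},\qquad0\le\varepsilon\le1.$$
   Context: $\mathrm{pred}(f)$ is the smallest index maximizing $f_c$ (under the fixed identification of labels with $\{1,\dots,k\}$). For $q\in\Delta_k$: $\ell(f,q)=\sum_cq_cL(\mathrm{pred}(f),c)$, $\phi(f,q)=\sum_cq_c\Phi(f,c)$, $\delta\ell(f,q)=\ell(f,q)-\inf_{\hat f\in\mathcal{F}}\ell(\hat f,q)$, $\delta\phi(f,q)=\phi(f,q)-\inf_{\hat f\in\mathcal{F}}\phi(\hat f,q)$; calibration function $H_{\Phi,L,\mathcal{F}}(\varepsilon)=\inf\{\delta\phi(f,q):f\in\mathcal{F},q\in\Delta_k,\delta\ell(f,q)\ge\varepsilon\}$ ($+\infty$ if empty). *)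

theory Defs
  imports "HOL-Analysis.Analysis"
begin

text \<open>Generic setting: labels are identified with the indices 0,...,k-1.
  A score vector is a function nat => real (only indices below k matter).
  L c c' is the loss of predicting c when the true label is c'.\<close>

definition pred :: "nat \<Rightarrow> (nat \<Rightarrow> real) \<Rightarrow> nat" where
  "pred k f = (LEAST c. c < k \<and> (\<forall>c'<k. f c' \<le> f c))"

definition prob_simplex :: "nat \<Rightarrow> (nat \<Rightarrow> real) set" where
  "prob_simplex k = {q. (\<forall>c<k. 0 \<le> q c) \<and> (\<Sum>c<k. q c) = 1}"

definition task_loss :: "nat \<Rightarrow> (nat \<Rightarrow> nat \<Rightarrow> real) \<Rightarrow> (nat \<Rightarrow> real) \<Rightarrow> (nat \<Rightarrow> real) \<Rightarrow> real" where
  "task_loss k L f q = (\<Sum>c<k. q c * L (pred k f) c)"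

definition surr_loss :: "nat \<Rightarrow> ((nat \<Rightarrow> real) \<Rightarrow> nat \<Rightarrow> real) \<Rightarrow> (nat \<Rightarrow> real) \<Rightarrow> (nat \<Rightarrow> real) \<Rightarrow> real" where
  "surr_loss k \<Phi> f q = (\<Sum>c<k. q c * \<Phi> f c)"

definition excess_task_loss where
  "excess_task_loss k L F f q = task_loss k L f q - (INF g\<in>F. task_loss k L g q)"

definition excess_surr_loss where
  "excess_surr_loss k \<Phi> F f q = surr_loss k \<Phi> f q - (INF g\<in>F. surr_loss k \<Phi> g q)"

text \<open>Calibration function; the infimum of the empty set in ereal is +infinity.\<close>
definition calibration_function ::
  "nat \<Rightarrow> ((nat \<Rightarrow> real) \<Rightarrow> nat \<Rightarrow> real) \<Rightarrow> (nat \<Rightarrow> nat \<Rightarrow> real) \<Rightarrow> (nat \<Rightarrow> real) set \<Rightarrow> real \<Rightarrow> ereal" where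
  "calibration_function k \<Phi> L F \<epsilon> =
     Inf {ereal (excess_surr_loss k \<Phi> F f q) | f q.
            f \<in> F \<and> q \<in> prob_simplex k \<and> excess_task_loss k L F f q \<ge> \<epsilon>}"

definition quad_surrogate :: "nat \<Rightarrow> (nat \<Rightarrow> nat \<Rightarrow> real) \<Rightarrow> (nat \<Rightarrow> real) \<Rightarrow> nat \<Rightarrow> real" where
  "quad_surrogate k L f y = (1 / (2 * real k)) * (\<Sum>c<k. (f c + L c y)\<^sup>2)"

definition loss_col_span :: "nat \<Rightarrow> (nat \<Rightarrow> nat \<Rightarrow> real) \<Rightarrow> (nat \<Rightarrow> real) set" where
  "loss_col_span k L = {f. \<exists>\<alpha> :: nat \<Rightarrow> real.
      f = (\<lambda>c. if c < k then (\<Sum>y<k. \<alpha> y * L c y) else 0)}"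

text \<open>Normalized Hamming loss on {0,1}^T, with labels identified with {0..<2^T} via lab.\<close>
definition hamming_loss :: "nat \<Rightarrow> (nat \<Rightarrow> bool list) \<Rightarrow> nat \<Rightarrow> nat \<Rightarrow> real" where
  "hamming_loss T lab c c' = real (card {t. t < T \<and> lab c ! t \<noteq> lab c' ! t}) / real T"

end

theory Submission imports Defs begin

definition xl :: "nat \<Rightarrow> bool list \<Rightarrow> real" where
  "xl t xs = (if xs ! t then 1 else -1)"

definition lq :: "nat \<Rightarrow> (nat \<Rightarrow> nat \<Rightarrow> real) \<Rightarrow> (nat \<Rightarrow> real) \<Rightarrow> nat \<Rightarrow> real" where
  "lq k L q c = (\<Sum>y<k. q y * L c y)"

lemma xl_sq: "xl t xs * xl t xs = 1" by (simp add: xl_def)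

lemma card_sum_if: "real (card {t. t < (T::nat) \<and> P t}) = (\<Sum>t<T. if P t then 1 else 0::real)"
proof -
  have "(\<Sum>t<T. if P t then 1 else 0::real) = (\<Sum>t\<in>{t. t < T \<and> P t}. 1)"
    by (rule sum.mono_neutral_cong_right) auto
  then show ?thesis by simp
qed

lemma ham_eq: "hamming_loss T lab c y = (1/T) * (\<Sum>t<T. (1 - xl t (lab c) * xl t (lab y))/2)"
proof -
  have "(\<Sum>t<T. if lab c ! t \<noteq> lab y ! t then 1 else 0::real) = (\<Sum>t<T. (1 - xl t (lab c) * xl t (lab y))/2)"
    by (rule sum.cong) (auto simp: xl_def)
  then show ?thesis unfolding hamming_loss_def card_sum_if by simp
qed

lemma odd_sum:
  assumes "bij_betw g S S" "\<And>x. x \<in> S \<Longrightarrow> F (g x) = - F x"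
  shows "sum F S = (0::real)"
proof -
  have "sum F S = sum (\<lambda>x. F (g x)) S" using sum.reindex_bij_betw[OF assms(1), of F] by simp
  also have "\<dots> = - sum F S" using assms(2) by (simp add: sum_negf)
  finally show ?thesis by simp
qed

lemma flip_bij:
  assumes "t < T"
  shows "bij_betw (\<lambda>xs. xs[t := \<not> xs ! t]) {xs. length xs = T} {xs::bool list. length xs = T}"
  by (rule bij_betw_byWitness[where f'="\<lambda>xs. xs[t := \<not> xs ! t]"]) (auto simp: assms)

lemma sum_xl: "t < T \<Longrightarrow> (\<Sum>xs\<in>{xs. length xs = T}. xl t xs) = 0"
  by (rule odd_sum[OF flip_bij]) (auto simp: xl_def)

lemma sum_xl2: "t < T \<Longrightarrow> s < T \<Longrightarrow> t \<noteq> s \<Longrightarrow>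
   (\<Sum>xs\<in>{xs. length xs = T}. xl t xs * xl s xs) = 0"
  by (rule odd_sum[OF flip_bij]) (auto simp: xl_def)


lemma pred_prop:
  assumes "0 < k"
  shows "pred k f < k \<and> (\<forall>c<k. f c \<le> f (pred k f))"
proof -
  have "Max (f ` {..<k}) \<in> f ` {..<k}" using assms by (intro Max_in) auto
  then obtain c0 where c0: "c0 < k" "f c0 = Max (f ` {..<k})" by auto
  have "\<forall>c<k. f c \<le> f c0" using c0 by auto
  then show ?thesis unfolding pred_def
    using LeastI[of "\<lambda>c. c < k \<and> (\<forall>c'<k. f c' \<le> f c)" c0] c0 by auto
qed

lemma surr_id:
  assumes q1: "(\<Sum>y<k. q y) = 1"
  shows "surr_loss k (quad_surrogate k L) f q =
     (1/(2*real k)) * (\<Sum>c<k. (f c + lq k L q c)\<^sup>2)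
     + (1/(2*real k)) * ((\<Sum>y<k. q y * (\<Sum>c<k. (L c y)\<^sup>2)) - (\<Sum>c<k. (lq k L q c)\<^sup>2))"
proof -
  define K where "K = 1/(2*real k)"
  define X where "X = (\<Sum>c<k. (f c)\<^sup>2)"
  have A: "(\<Sum>c<k. (f c + L c y)\<^sup>2) = X + 2 * (\<Sum>c<k. f c * L c y) + (\<Sum>c<k. (L c y)\<^sup>2)" for y
    by (simp add: X_def power2_sum sum.distrib sum_distrib_left mult_ac)
  have B: "(\<Sum>y<k. q y * (\<Sum>c<k. f c * L c y)) = (\<Sum>c<k. f c * lq k L q c)"
  proof -
    have "(\<Sum>y<k. q y * (\<Sum>c<k. f c * L c y)) = (\<Sum>y<k. \<Sum>c<k. f c * (q y * L c y))"
      by (simp add: sum_distrib_left mult_ac)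
    also have "\<dots> = (\<Sum>c<k. \<Sum>y<k. f c * (q y * L c y))" by (rule sum.swap)
    also have "\<dots> = (\<Sum>c<k. f c * lq k L q c)" by (simp add: lq_def sum_distrib_left)
    finally show ?thesis .
  qed
  have C: "(\<Sum>c<k. (f c + lq k L q c)\<^sup>2) = X + 2 * (\<Sum>c<k. f c * lq k L q c) + (\<Sum>c<k. (lq k L q c)\<^sup>2)"
    by (simp add: X_def power2_sum sum.distrib sum_distrib_left mult_ac)
  have "surr_loss k (quad_surrogate k L) f q = (\<Sum>y<k. K * (q y * X) + 2 * K * (q y * (\<Sum>c<k. f c * L c y)) + K * (q y * (\<Sum>c<k. (L c y)\<^sup>2)))"
    unfolding surr_loss_def quad_surrogate_def K_def[symmetric] A by (intro sum.cong refl) (simp add: algebra_simps)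
  also have "\<dots> = K * (X * (\<Sum>y<k. q y)) + 2 * K * (\<Sum>y<k. q y * (\<Sum>c<k. f c * L c y)) + K * (\<Sum>y<k. q y * (\<Sum>c<k. (L c y)\<^sup>2))"
    unfolding sum.distrib by (simp add: sum_distrib_left mult_ac)
  also have "\<dots> = K * (\<Sum>c<k. (f c + lq k L q c)\<^sup>2) + K * ((\<Sum>y<k. q y * (\<Sum>c<k. (L c y)\<^sup>2)) - (\<Sum>c<k. (lq k L q c)\<^sup>2))"
    unfolding q1 B C by (simp add: algebra_simps)
  finally show ?thesis by (simp add: K_def)
qed

definition hq :: "nat \<Rightarrow> (nat \<Rightarrow> nat \<Rightarrow> real) \<Rightarrow> (nat \<Rightarrow> real) \<Rightarrow> nat \<Rightarrow> real" where
  "hq k L q = (\<lambda>c. if c < k then - lq k L q c else 0)"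

lemma hq_span: "hq k L q \<in> loss_col_span k L"
  unfolding loss_col_span_def hq_def lq_def
  by (auto intro!: exI[of _ "\<lambda>y. - q y"] simp: sum_negf fun_eq_iff)

lemma exsurr:
  assumes q1: "(\<Sum>y<k. q y) = 1" and "hq k L q \<in> F"
  shows "excess_surr_loss k (quad_surrogate k L) F f q = (1/(2*real k)) * (\<Sum>c<k. (f c + lq k L q c)\<^sup>2)"
proof -
  define R where "R = (1/(2*real k)) * ((\<Sum>y<k. q y * (\<Sum>c<k. (L c y)\<^sup>2)) - (\<Sum>c<k. (lq k L q c)\<^sup>2))"
  have "(INF g\<in>F. surr_loss k (quad_surrogate k L) g q) = R"
  proof (rule cInf_eq_minimum)
    have "surr_loss k (quad_surrogate k L) (hq k L q) q = R"
      unfolding surr_id[OF q1] R_def by (simp add: hq_def)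
    then show "R \<in> (\<lambda>g. surr_loss k (quad_surrogate k L) g q) ` F" using assms(2) by force
  next
    fix x assume "x \<in> (\<lambda>g. surr_loss k (quad_surrogate k L) g q) ` F"
    then obtain g where "x = surr_loss k (quad_surrogate k L) g q" by auto
    moreover have "0 \<le> (1/(2*real k)) * (\<Sum>c<k. (g c + lq k L q c)\<^sup>2)"
      by (intro mult_nonneg_nonneg sum_nonneg) auto
    ultimately show "R \<le> x" unfolding surr_id[OF q1] R_def by simp
  qed
  then show ?thesis unfolding excess_surr_loss_def surr_id[OF q1] R_def by simp
qed

lemma task_eq: "task_loss k L f q = lq k L q (pred k f)"
  unfolding task_loss_def lq_def by simp

lemma extask:
  assumes "0 < k" and "hq k L q \<in> F"
  shows "excess_task_loss k L F f q = lq k L q (pred k f) - lq k L q (pred k (hq k L q))"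
    and "\<forall>c<k. lq k L q (pred k (hq k L q)) \<le> lq k L q c"
proof -
  have P: "pred k (hq k L q) < k" "\<forall>c<k. hq k L q c \<le> hq k L q (pred k (hq k L q))"
    using pred_prop[OF assms(1)] by auto
  show m: "\<forall>c<k. lq k L q (pred k (hq k L q)) \<le> lq k L q c"
    using P by (auto simp: hq_def)
  have "(INF g\<in>F. task_loss k L g q) = lq k L q (pred k (hq k L q))"
  proof (rule cInf_eq_minimum)
    show "lq k L q (pred k (hq k L q)) \<in> (\<lambda>g. task_loss k L g q) ` F"
      using assms(2) by (force simp: task_eq)
  next
    fix x assume "x \<in> (\<lambda>g. task_loss k L g q) ` F"
    then obtain g where "x = task_loss k L g q" by auto
    then show "lq k L q (pred k (hq k L q)) \<le> x"
      using m pred_prop[OF assms(1), of g] by (simp add: task_eq)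
  qed
  then show "excess_task_loss k L F f q = lq k L q (pred k f) - lq k L q (pred k (hq k L q))"
    unfolding excess_task_loss_def task_eq by simp
qed


definition mq :: "nat \<Rightarrow> (nat \<Rightarrow> bool list) \<Rightarrow> (nat \<Rightarrow> real) \<Rightarrow> nat \<Rightarrow> real" where
  "mq T lab q t = (\<Sum>y<2^T. q y * xl t (lab y))"

lemma xl_cases: "xl t xs = 1 \<or> xl t xs = -1" by (simp add: xl_def)

lemma key_ineq:
  fixes x b n :: real
  assumes "x = 1 \<or> x = -1" "0 \<le> b * x"
  shows "(\<bar>n\<bar> - x * n) / 2 \<le> \<bar>b - n\<bar>"
  using assms by (auto simp: abs_if)

context
  fixes T :: nat and lab :: "nat \<Rightarrow> bool list"
  assumes T1: "T \<ge> 1" and bij: "bij_betw lab {..<2^T} {xs. length xs = T}"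
begin

lemma sum_lab: "(\<Sum>c<2^T. G (lab c)) = (\<Sum>xs\<in>{xs. length xs = T}. G xs)"
  using sum.reindex_bij_betw[OF bij, of G] by simp

lemma orth1: "t < T \<Longrightarrow> (\<Sum>c<2^T. xl t (lab c)) = 0"
  using sum_lab[of "xl t"] sum_xl by simp

lemma orth2: "t < T \<Longrightarrow> s < T \<Longrightarrow>
   (\<Sum>c<2^T. xl t (lab c) * xl s (lab c)) = (if t = s then 2^T else 0)"
proof (cases "t = s")
  case True then show ?thesis by (simp add: xl_sq)
next
  case False
  assume "t < T" "s < T"
  then show ?thesis using sum_lab[of "\<lambda>xs. xl t xs * xl s xs"] sum_xl2[of t T s] False by simp
qed

lemma parseval:
  "(\<Sum>c<2^T. (d0 + (\<Sum>t<T. d t * xl t (lab c)))\<^sup>2) = 2^T * (d0\<^sup>2 + (\<Sum>t<T. (d t)\<^sup>2))"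
proof -
  have e1: "(\<Sum>c<(2::nat)^T. (\<Sum>t<T. d t * xl t (lab c))) = 0"
    by (subst sum.swap) (simp add: sum_distrib_left[symmetric] orth1)
  have e2: "(\<Sum>c<(2::nat)^T. (\<Sum>t<T. d t * xl t (lab c))\<^sup>2) = 2^T * (\<Sum>t<T. (d t)\<^sup>2)"
  proof -
    have "(\<Sum>c<(2::nat)^T. (\<Sum>t<T. d t * xl t (lab c))\<^sup>2)
       = (\<Sum>c<(2::nat)^T. \<Sum>t<T. \<Sum>s<T. d t * d s * (xl t (lab c) * xl s (lab c)))"
      by (simp add: power2_eq_square sum_product algebra_simps)
    also have "\<dots> = (\<Sum>t<T. \<Sum>s<T. d t * d s * (\<Sum>c<(2::nat)^T. xl t (lab c) * xl s (lab c)))"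
    proof -
      have "(\<Sum>c<(2::nat)^T. \<Sum>t<T. \<Sum>s<T. d t * d s * (xl t (lab c) * xl s (lab c)))
          = (\<Sum>t<T. \<Sum>c<(2::nat)^T. \<Sum>s<T. d t * d s * (xl t (lab c) * xl s (lab c)))"
        by (rule sum.swap)
      also have "\<dots> = (\<Sum>t<T. \<Sum>s<T. \<Sum>c<(2::nat)^T. d t * d s * (xl t (lab c) * xl s (lab c)))"
        by (rule sum.cong[OF refl], rule sum.swap)
      finally show ?thesis by (simp add: sum_distrib_left)
    qed
    also have "\<dots> = (\<Sum>t<T. \<Sum>s<T. d t * d s * (if t = s then 2^T else 0))"
      by (intro sum.cong refl) (simp add: orth2)
    also have "\<dots> = 2^T * (\<Sum>t<T. (d t)\<^sup>2)"
      by (simp add: sum_distrib_left power2_eq_square mult_ac if_distrib cong: if_cong)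
    finally show ?thesis .
  qed
  have "(\<Sum>c<(2::nat)^T. (d0 + (\<Sum>t<T. d t * xl t (lab c)))\<^sup>2)
      = (\<Sum>c<(2::nat)^T. d0\<^sup>2 + (\<Sum>t<T. d t * xl t (lab c))\<^sup>2 + 2 * d0 * (\<Sum>t<T. d t * xl t (lab c)))"
    by (simp add: power2_sum)
  also have "\<dots> = 2^T * d0\<^sup>2 + 2^T * (\<Sum>t<T. (d t)\<^sup>2) + 2 * d0 * 0"
    by (simp add: sum.distrib sum_distrib_left[symmetric] e1 e2)
  also have "\<dots> = 2^T * d0\<^sup>2 + 2 * d0 * 0 + 2^T * (\<Sum>t<T. (d t)\<^sup>2)"
    by (simp add: sum.distrib sum_distrib_left[symmetric] e1 e2)
  finally show ?thesis by (simp add: algebra_simps)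
qed


lemma Tpos: "real T > 0" using T1 by simp

lemma len_lab: "c < 2^T \<Longrightarrow> length (lab c) = T"
  using bij_betwE[OF bij] by auto

lemma surj_lab: "length xs = T \<Longrightarrow> \<exists>c<2^T. lab c = xs"
  using bij_betw_imp_surj_on[OF bij] by (metis (mono_tags, lifting) imageE lessThan_iff mem_Collect_eq)

lemma lq_ham:
  "(\<Sum>y<2^T. q y * hamming_loss T lab c y) = (\<Sum>y<2^T. q y)/2 - (\<Sum>t<T. mq T lab q t / (2*T) * xl t (lab c))"
proof -
  have tp: "real T \<noteq> 0" using Tpos by simp
  have A: "q y * hamming_loss T lab c y = (\<Sum>t<T. q y / (2*T) - xl t (lab c) * (q y * xl t (lab y)) / (2*T))" for y
    unfolding ham_eq sum_distrib_left by (intro sum.cong refl) (simp add: field_simps tp)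
  have "(\<Sum>y<2^T. q y * hamming_loss T lab c y)
      = (\<Sum>y<(2::nat)^T. \<Sum>t<T. q y / (2*T) - xl t (lab c) * (q y * xl t (lab y)) / (2*T))"
    by (simp add: A)
  also have "\<dots> = (\<Sum>t<T. \<Sum>y<(2::nat)^T. q y / (2*T) - xl t (lab c) * (q y * xl t (lab y)) / (2*T))"
    by (rule sum.swap)
  also have "\<dots> = (\<Sum>t<T. (\<Sum>y<(2::nat)^T. q y) / (2*T) - mq T lab q t / (2*T) * xl t (lab c))"
  proof (intro sum.cong refl)
    fix t
    have m: "(\<Sum>y<(2::nat)^T. q y * (xl t (lab y) * xl t (lab c))) = xl t (lab c) * mq T lab q t"
      unfolding mq_def sum_distrib_left by (intro sum.cong refl) (simp add: mult_ac)
    show "(\<Sum>y<(2::nat)^T. q y / (2*T) - xl t (lab c) * (q y * xl t (lab y)) / (2*T))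
       = (\<Sum>y<(2::nat)^T. q y) / (2*T) - mq T lab q t / (2*T) * xl t (lab c)"
      by (simp add: sum_subtractf sum_divide_distrib[symmetric] sum_distrib_left[symmetric] m mq_def)
  qed
  also have "\<dots> = (\<Sum>y<2^T. q y)/2 - (\<Sum>t<T. mq T lab q t / (2*T) * xl t (lab c))"
    using T1 by (simp add: sum_subtractf tp)
  finally show ?thesis .
qed

lemma span_form:
  assumes "f \<in> loss_col_span (2^T) (hamming_loss T lab)"
  shows "\<exists>b0 b. \<forall>c<2^T. f c = b0 + (\<Sum>t<T. b t * xl t (lab c))"
proof -
  obtain \<alpha> where fa: "f = (\<lambda>c. if c < 2^T then (\<Sum>y<2^T. \<alpha> y * hamming_loss T lab c y) else 0)"
    using assms unfolding loss_col_span_def by auto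
  show ?thesis
    by (rule exI[of _ "(\<Sum>y<2^T. \<alpha> y)/2"], rule exI[of _ "\<lambda>t. - (mq T lab \<alpha> t / (2*T))"])
       (simp add: fa lq_ham sum_negf)
qed

lemma lower:
  assumes fF: "f \<in> loss_col_span (2^T) (hamming_loss T lab)"
    and qS: "q \<in> prob_simplex (2^T)" and e0: "0 \<le> \<epsilon>"
    and ex: "\<epsilon> \<le> excess_task_loss (2^T) (hamming_loss T lab) (loss_col_span (2^T) (hamming_loss T lab)) f q"
  shows "\<epsilon>\<^sup>2 / (8 * real T) \<le> excess_surr_loss (2^T) (quad_surrogate (2^T) (hamming_loss T lab)) (loss_col_span (2^T) (hamming_loss T lab)) f q"
proof -
  let ?L = "hamming_loss T lab"
  let ?F = "loss_col_span (2^T) ?L"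
  have k0: "0 < (2::nat)^T" by simp
  have q1: "(\<Sum>y<2^T. q y) = 1" using qS by (simp add: prob_simplex_def)
  have hF: "hq (2^T) ?L q \<in> ?F" by (rule hq_span)
  obtain b0 b where fb: "\<forall>c<2^T. f c = b0 + (\<Sum>t<T. b t * xl t (lab c))"
    using span_form[OF fF] by blast
  define p where "p = pred (2^T) f"
  have p: "p < 2^T" "\<forall>c<2^T. f c \<le> f p" using pred_prop[OF k0, of f] by (auto simp: p_def)
  define ph where "ph = pred (2^T) (hq (2^T) ?L q)"
  have ph: "ph < 2^T" using pred_prop[OF k0] by (auto simp: ph_def)
  define n where "n t = mq T lab q t / (2*T)" for t
  have lqf: "lq (2^T) ?L q c = 1/2 - (\<Sum>t<T. n t * xl t (lab c))" for c
    unfolding lq_def lq_ham q1 n_def by simp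
  have sign: "0 \<le> b t * xl t (lab p)" if t: "t < T" for t
  proof -
    have lp: "length (lab p) = T" using len_lab p(1) by simp
    obtain c' where c': "c' < 2^T" "lab c' = (lab p)[t := \<not> lab p ! t]"
      using surj_lab[of "(lab p)[t := \<not> lab p ! t]"] lp by auto
    have xs: "xl s (lab c') = (if s = t then - xl t (lab p) else xl s (lab p))" for s
      using c'(2) lp t by (auto simp: xl_def nth_list_update)
    have "(\<Sum>s<T. b s * xl s (lab c')) = (\<Sum>s<T. b s * xl s (lab p) - (if s = t then 2 * (b t * xl t (lab p)) else 0))"
      by (intro sum.cong refl) (auto simp: xs)
    also have "\<dots> = (\<Sum>s<T. b s * xl s (lab p)) - 2 * (b t * xl t (lab p))"
      using t by (simp add: sum_subtractf)
    finally have "f c' = f p - 2 * (b t * xl t (lab p))" using fb c'(1) p(1) by simp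
    moreover have "f c' \<le> f p" using p(2) c'(1) by blast
    ultimately show ?thesis by linarith
  qed
  define w where "w t = \<bar>n t\<bar> - xl t (lab p) * n t" for t
  have "excess_task_loss (2^T) ?L ?F f q = lq (2^T) ?L q p - lq (2^T) ?L q ph"
    using extask(1)[OF k0 hF] by (simp add: p_def ph_def)
  also have "\<dots> = (\<Sum>t<T. n t * xl t (lab ph) - n t * xl t (lab p))"
    by (simp add: lqf sum_subtractf)
  also have "\<dots> \<le> (\<Sum>t<T. w t)"
  proof (rule sum_mono)
    fix t
    have "n t * xl t (lab ph) \<le> \<bar>n t\<bar>" using xl_cases[of t "lab ph"] by auto
    then show "n t * xl t (lab ph) - n t * xl t (lab p) \<le> w t" by (simp add: w_def mult_ac)
  qed
  finally have ew: "\<epsilon> \<le> (\<Sum>t<T. w t)" using ex by linarith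
  have wd: "(w t / 2)\<^sup>2 \<le> (b t - n t)\<^sup>2" if "t < T" for t
  proof -
    have a: "w t / 2 \<le> \<bar>b t - n t\<bar>" unfolding w_def
      by (rule key_ineq[OF xl_cases sign[OF that]])
    have "0 \<le> w t" using xl_cases[of t "lab p"] by (auto simp: w_def)
    then have "(w t / 2)\<^sup>2 \<le> \<bar>b t - n t\<bar>\<^sup>2" using a by (intro power_mono) auto
    then show ?thesis by simp
  qed
  have cs: "(\<Sum>t<T. w t)\<^sup>2 \<le> real T * (\<Sum>t<T. (w t)\<^sup>2)"
    using Cauchy_Schwarz_ineq_sum[of "\<lambda>_. 1" w "{..<T}"] by simp
  have e2: "\<epsilon>\<^sup>2 \<le> (\<Sum>t<T. w t)\<^sup>2" using ew e0 by (intro power_mono) auto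
  have sw: "(\<Sum>t<T. (w t)\<^sup>2) / 4 \<le> (\<Sum>t<T. (b t - n t)\<^sup>2)"
  proof -
    have "(\<Sum>t<T. (w t)\<^sup>2) / 4 = (\<Sum>t<T. (w t / 2)\<^sup>2)"
      by (simp add: sum_divide_distrib power_divide)
    also have "\<dots> \<le> (\<Sum>t<T. (b t - n t)\<^sup>2)" by (intro sum_mono wd) auto
    finally show ?thesis .
  qed
  have "(\<Sum>c<(2::nat)^T. (f c + lq (2^T) ?L q c)\<^sup>2)
      = (\<Sum>c<(2::nat)^T. ((b0 + 1/2) + (\<Sum>t<T. (b t - n t) * xl t (lab c)))\<^sup>2)"
  proof (intro sum.cong refl)
    fix c assume "c \<in> {..<(2::nat)^T}"
    then have fc: "f c = b0 + (\<Sum>t<T. b t * xl t (lab c))" using fb by simp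
    have e: "(\<Sum>t<T. (b t - n t) * xl t (lab c)) = (\<Sum>t<T. b t * xl t (lab c)) - (\<Sum>t<T. n t * xl t (lab c))"
      by (simp add: left_diff_distrib sum_subtractf)
    show "(f c + lq (2^T) ?L q c)\<^sup>2 = ((b0 + 1/2) + (\<Sum>t<T. (b t - n t) * xl t (lab c)))\<^sup>2"
      unfolding fc lqf e by (rule arg_cong[where f="\<lambda>x. x\<^sup>2"]) linarith
  qed
  also have "\<dots> = 2^T * ((b0 + 1/2)\<^sup>2 + (\<Sum>t<T. (b t - n t)\<^sup>2))"
    by (rule parseval)
  finally have eqs: "excess_surr_loss (2^T) (quad_surrogate (2^T) ?L) ?F f q
      = ((b0 + 1/2)\<^sup>2 + (\<Sum>t<T. (b t - n t)\<^sup>2)) / 2"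
    using exsurr[OF q1 hF, of f] by simp
  have fin: "\<epsilon>\<^sup>2 / (8 * real T) \<le> (\<Sum>t<T. (b t - n t)\<^sup>2) / 2"
  proof -
    have "\<epsilon>\<^sup>2 \<le> real T * (\<Sum>t<T. (w t)\<^sup>2)" using e2 cs by linarith
    then have "\<epsilon>\<^sup>2 / real T \<le> (\<Sum>t<T. (w t)\<^sup>2)" using Tpos by (simp add: divide_le_eq mult_ac)
    moreover have "\<epsilon>\<^sup>2 / (8 * real T) = (\<epsilon>\<^sup>2 / real T) / 8" by simp
    ultimately show ?thesis using sw by linarith
  qed
  have "(\<Sum>t<T. (b t - n t)\<^sup>2) / 2 \<le> ((b0 + 1/2)\<^sup>2 + (\<Sum>t<T. (b t - n t)\<^sup>2)) / 2"
    by (intro divide_right_mono) simp_all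
  then show ?thesis unfolding eqs using fin by (rule order_trans[rotated])
qed

lemma two_point:
  fixes g :: "nat \<Rightarrow> real"
  assumes "c1 < 2^T" "c1 \<noteq> 0" "\<And>y. y \<noteq> 0 \<Longrightarrow> y \<noteq> c1 \<Longrightarrow> g y = 0"
  shows "(\<Sum>y<2^T. g y) = g 0 + g c1"
proof -
  have "(\<Sum>y<(2::nat)^T. g y) = (\<Sum>y\<in>{0,c1}. g y)"
    by (rule sum.mono_neutral_right) (use assms in auto)
  then show ?thesis using assms(2) by simp
qed

lemma witness:
  assumes e0: "0 \<le> \<epsilon>" and e1: "\<epsilon> \<le> 1"
  shows "\<exists>f q. f \<in> loss_col_span (2^T) (hamming_loss T lab) \<and> q \<in> prob_simplex (2^T) \<and>
     \<epsilon> \<le> excess_task_loss (2^T) (hamming_loss T lab) (loss_col_span (2^T) (hamming_loss T lab)) f q \<and>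
     excess_surr_loss (2^T) (quad_surrogate (2^T) (hamming_loss T lab)) (loss_col_span (2^T) (hamming_loss T lab)) f q
       = \<epsilon>\<^sup>2 / (8 * real T)"
proof -
  let ?L = "hamming_loss T lab"
  let ?F = "loss_col_span (2^T) ?L"
  have k0: "0 < (2::nat)^T" by simp
  have T0: "T \<noteq> 0" using T1 by simp
  have l0: "length (lab 0) = T" using len_lab[of 0] by simp
  obtain c1 where c1: "c1 < 2^T" "lab c1 = map Not (lab 0)"
    using surj_lab[of "map Not (lab 0)"] l0 by auto
  have c10: "c1 \<noteq> 0"
  proof
    assume "c1 = 0"
    then have "lab 0 ! 0 = map Not (lab 0) ! 0" using c1 by simp
    then show False using l0 T1 by simp
  qed
  have xc1: "xl t (lab c1) = - xl t (lab 0)" if "t < T" for t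
    using that by (simp add: c1 xl_def l0)
  have allT: "{t. t < T \<and> lab 0 ! t \<noteq> lab c1 ! t} = {..<T}" "{t. t < T \<and> lab c1 ! t \<noteq> lab 0 ! t} = {..<T}"
    by (auto simp: c1 l0)
  have L00: "?L 0 0 = 0" and L11: "?L c1 c1 = 0" by (simp_all add: hamming_loss_def)
  have L01: "?L 0 c1 = 1" and L10: "?L c1 0 = 1" unfolding hamming_loss_def allT using T0 by simp_all
  define a where "a = (1 - \<epsilon>) / 2"
  define bb where "bb = (1 + \<epsilon>) / 2"
  define q0 where "q0 y = (if y = 0 then a else if y = c1 then bb else 0)" for y
  have q0_0: "q0 0 = a" and q0_1: "q0 c1 = bb" using c10 by (simp_all add: q0_def)
  have q1: "(\<Sum>y<2^T. q0 y) = 1"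
    by (subst two_point[OF c1(1) c10]) (auto simp: q0_def a_def bb_def c10 field_simps)
  have qS: "q0 \<in> prob_simplex (2^T)"
    unfolding prob_simplex_def using q1 e0 e1 by (auto simp: q0_def a_def bb_def)
  define f0 where "f0 = (\<lambda>c::nat. if c < 2^T then - 1/2 else (0::real))"
  have fF: "f0 \<in> ?F"
  proof -
    define \<alpha> where "\<alpha> = (\<lambda>y::nat. - 1 / (2^T::real))"
    have sa: "(\<Sum>y<(2::nat)^T. \<alpha> y) = -1" by (simp add: \<alpha>_def)
    have ma: "mq T lab \<alpha> t = 0" if "t < T" for t
      unfolding mq_def \<alpha>_def using orth1[OF that] by (simp add: sum_negf sum_divide_distrib[symmetric])
    have "(\<Sum>y<2^T. \<alpha> y * ?L c y) = - 1/2" for c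
      unfolding lq_ham sa by (simp add: ma)
    then have "f0 = (\<lambda>c. if c < 2^T then (\<Sum>y<2^T. \<alpha> y * ?L c y) else 0)"
      by (intro ext) (simp add: f0_def)
    then show ?thesis unfolding loss_col_span_def by blast
  qed
  have pf0: "pred (2^T) f0 = 0"
    unfolding pred_def by (rule Least_eq_0) (simp add: f0_def)
  have hF: "hq (2^T) ?L q0 \<in> ?F" by (rule hq_span)
  have lq0: "lq (2^T) ?L q0 0 = bb"
    unfolding lq_def by (subst two_point[OF c1(1) c10]) (auto simp: q0_def L00 L01 c10)
  have lq1: "lq (2^T) ?L q0 c1 = a"
    unfolding lq_def by (subst two_point[OF c1(1) c10]) (auto simp: q0_def L10 L11 c10)
  have task: "\<epsilon> \<le> excess_task_loss (2^T) ?L ?F f0 q0"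
    proof -
    have "lq (2^T) ?L q0 (pred (2^T) (hq (2^T) ?L q0)) \<le> a"
      using extask(2)[OF k0 hF] c1(1) lq1 by metis
    moreover have "excess_task_loss (2^T) ?L ?F f0 q0 = bb - lq (2^T) ?L q0 (pred (2^T) (hq (2^T) ?L q0))"
      using extask(1)[OF k0 hF, of f0] by (simp add: pf0 lq0)
    moreover have "bb - a = \<epsilon>" by (simp add: a_def bb_def field_simps)
    ultimately show ?thesis by linarith
  qed
  define n where "n t = mq T lab q0 t / (2*T)" for t
  have lqf: "lq (2^T) ?L q0 c = 1/2 - (\<Sum>t<T. n t * xl t (lab c))" for c
    unfolding lq_def lq_ham q1 n_def by simp
  have mq0: "mq T lab q0 t = - \<epsilon> * xl t (lab 0)" if "t < T" for t
    unfolding mq_def by (subst two_point[OF c1(1) c10]) (auto simp: q0_def c10 xc1[OF that] a_def bb_def field_simps)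
  have n2: "(n t)\<^sup>2 = \<epsilon>\<^sup>2 / (4 * (real T)\<^sup>2)" if "t < T" for t
  proof -
    have "(n t)\<^sup>2 = \<epsilon>\<^sup>2 * (xl t (lab 0) * xl t (lab 0)) / (4 * (real T)\<^sup>2)"
      unfolding n_def mq0[OF that] by (simp add: power2_eq_square field_simps)
    then show ?thesis by (simp add: xl_sq)
  qed
  have "(\<Sum>c<(2::nat)^T. (f0 c + lq (2^T) ?L q0 c)\<^sup>2)
      = (\<Sum>c<(2::nat)^T. (0 + (\<Sum>t<T. (- n t) * xl t (lab c)))\<^sup>2)"
    by (intro sum.cong refl) (simp add: f0_def lqf sum_negf)
  also have "\<dots> = 2^T * (0\<^sup>2 + (\<Sum>t<T. (- n t)\<^sup>2))" by (rule parseval)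
  also have "\<dots> = 2^T * (\<Sum>t<T. \<epsilon>\<^sup>2 / (4 * (real T)\<^sup>2))"
    by (simp add: n2)
  also have "\<dots> = 2^T * (\<epsilon>\<^sup>2 / (4 * real T))"
    using T0 by (simp add: power2_eq_square)
  finally have "excess_surr_loss (2^T) (quad_surrogate (2^T) ?L) ?F f0 q0 = \<epsilon>\<^sup>2 / (8 * real T)"
    using exsurr[OF q1 hF, of f0] by simp
  then show ?thesis using fF qS task by blast
qed
end

theorem proposition15:
  fixes T :: nat and lab :: "nat \<Rightarrow> bool list" and \<epsilon> :: real
  assumes "T \<ge> 1"
    and "bij_betw lab {..<2^T} {xs. length xs = T}"
    and "0 \<le> \<epsilon>" and "\<epsilon> \<le> 1"
  shows "calibration_function (2^T) (quad_surrogate (2^T) (hamming_loss T lab))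
           (hamming_loss T lab) (loss_col_span (2^T) (hamming_loss T lab)) \<epsilon>
         = ereal (\<epsilon>\<^sup>2 / (8 * real T))"
  unfolding calibration_function_def
proof (rule antisym)
  obtain f q where w: "f \<in> loss_col_span (2^T) (hamming_loss T lab)" "q \<in> prob_simplex (2^T)"
     "\<epsilon> \<le> excess_task_loss (2^T) (hamming_loss T lab) (loss_col_span (2^T) (hamming_loss T lab)) f q"
     "excess_surr_loss (2^T) (quad_surrogate (2^T) (hamming_loss T lab)) (loss_col_span (2^T) (hamming_loss T lab)) f q
       = \<epsilon>\<^sup>2 / (8 * real T)"
    using witness[OF assms] by blast
  show "Inf {ereal (excess_surr_loss (2^T) (quad_surrogate (2^T) (hamming_loss T lab)) (loss_col_span (2^T) (hamming_loss T lab)) f q) | f q.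
            f \<in> loss_col_span (2^T) (hamming_loss T lab) \<and> q \<in> prob_simplex (2^T) \<and>
            excess_task_loss (2^T) (hamming_loss T lab) (loss_col_span (2^T) (hamming_loss T lab)) f q \<ge> \<epsilon>}
        \<le> ereal (\<epsilon>\<^sup>2 / (8 * real T))"
    by (rule Inf_lower) (use w in force)
next
  show "ereal (\<epsilon>\<^sup>2 / (8 * real T)) \<le> Inf {ereal (excess_surr_loss (2^T) (quad_surrogate (2^T) (hamming_loss T lab)) (loss_col_span (2^T) (hamming_loss T lab)) f q) | f q.
            f \<in> loss_col_span (2^T) (hamming_loss T lab) \<and> q \<in> prob_simplex (2^T) \<and>
            excess_task_loss (2^T) (hamming_loss T lab) (loss_col_span (2^T) (hamming_loss T lab)) f q \<ge> \<epsilon>}"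
    by (rule Inf_greatest) (auto intro: lower[OF assms(1,2) _ _ assms(3)])
qed

end
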